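(* Assume $\langle f\rangle_X=0$ and that $\psi$ satisfies (A1) and (A2). Then a function $u^H\in U^H_\#$ solves the HQC problem if and only if \[ \langle\psi^0_{\rm coll}Du^H,Dv^H\rangle_X=\langle f,v^H\rangle_X\quad\text{for all }v^H\in U^H_\#, \] where $\psi^0_{\rm coll}(X_i)=\psi^0(X_{i_k^{\rm coll}})$ for $X_i\in S_k$.
   Context: Let $\epsilon>0$, $N,p$ positive integers with normalization $N\epsilon=1$; $X_i=\epsilon i$, $Y_j=j$. $U^N_{\rm per}(\epsilon\mathbb Z)$: functions $u:\epsilon\mathbb Z\to\mathbb R$ with $u(X_{i+N})=u(X_i)$; $U^N_\#(\epsilon\mathbb Z)$: those with $\langle u\rangle_X:=\frac1N\sum_{i=1}^Nu(X_i)=0$. $\langle u,v\rangle_X=\frac1N\sum_{i=1}^Nu(X_i)v(X_i)$, $Du(X_i)=(u(X_{i+1})-u(X_i))/\epsilon$. $U^p_\#(\epsilon\mathbb Z)$: $p$-periodic functions on $\epsilon\mathbb Z$ with $\sum_{i=1}^pw(X_i)=0$. Two-scale functions $g:\epsilon\mathbb Z\times\mathbb Z\to\mathbb R$ satisfy $g(X_{i+N},Y_j)=g(X_i,Y_j)=g(X_i,Y_{j+p})$; $D_Xg(X_i,Y_j)=(g(X_{i+1},Y_j)-g(X_i,Y_j))/\epsilon$, $\|g\|_{L^\infty(N,p)}=\max_{1\le i\le N,1\le j\le p}|g|$. $\psi$ is a two-scale function with (A1) $0<c_\psi\le\psi\le C_\psi$ and (A2) $\|D_X\psi\|_{L^\infty(N,p)}\le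 C'_\psi$; $\psi^0(X_i)=(\frac1p\sum_{j=1}^p1/\psi(X_i,Y_j))^{-1}$. $f\in U^N_{\rm per}(\epsilon\mathbb Z)$. HQC method: indices $1=i_1<\dots<i_K\le N$, $i_{K+1}=N+1$, $S_k=\{X_i:i_k\le i<i_{k+1}\}$, $H_k=\epsilon(i_{k+1}-i_k)$. $U^H_{\rm per}$: $v\in U^N_{\rm per}(\epsilon\mathbb Z)$ affine on each $\{X_i:i_k\le i\le i_{k+1}\}$; $U^H_\#=U^H_{\rm per}\cap U^N_\#(\epsilon\mathbb Z)$. Sampling domains $S_k^{\rm rep}=\{X_i:i_k^{\rm rep}\le i<i_k^{\rm rep}+p\}\subset S_k$, collocation indices with $X_{i_k^{\rm coll}}\in S_k^{\rm rep}$, $\psi^\epsilon_{{\rm coll},k}(X_i)=\psi(X_{i_k^{\rm coll}},X_i/\epsilon)$, $\langle a,b\rangle_{S_k^{\rm rep}}=\frac1p\sum_{X_i\in S_k^{\rm rep}}a(X_i)b(X_i)$. For $v^H\in U^H_{\rm per}$ let $\ell_k$ be the affine function on $\epsilon\mathbb Z$ equal to $v^H$ on $S_k$; $\mathcal R_k(v^H)=\ell_k+w$ with $w\in U^p_\#(\epsilon\mathbb Z)$ such that $\langle\psi^\epsilon_{{\rm coll},k}D(\ell_k+w),Ds\rangle_{S_k^{\rm rep}}=0$ for all $s\in U^p_\#(\epsilon\mathbb Z)$. HQC problem: $u^H\in U^H_\#$ with $\sum_{k=1}^KH_k\langle\psi^\epsilon_{{\rm coll},k}D\mathcal R_k(u^H),D\mathcal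 R_k(v^H)\rangle_{S_k^{\rm rep}}=\langle f,v^H\rangle_X$ for all $v^H\in U^H_\#$. *)

theory Defs
  imports Complex_Main
begin

text \<open>Grid functions on eps*Z are represented by their values at the grid
  indices: u :: int => real, with u i standing for u(X_i), X_i = eps*i.
  Two-scale functions g(X_i,Y_j) are represented as g :: int => int => real.\<close>

definition per :: "nat \<Rightarrow> (int \<Rightarrow> real) \<Rightarrow> bool" where
  "per n u \<longleftrightarrow> (\<forall>i. u (i + int n) = u i)"

definition meanX :: "nat \<Rightarrow> (int \<Rightarrow> real) \<Rightarrow> real" where
  "meanX N u = (1 / real N) * (\<Sum>i\<in>{1..int N}. u i)"

definition ipX :: "nat \<Rightarrow> (int \<Rightarrow> real) \<Rightarrow> (int \<Rightarrow> real) \<Rightarrow> real" where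
  "ipX N u v = (1 / real N) * (\<Sum>i\<in>{1..int N}. u i * v i)"

definition Dop :: "real \<Rightarrow> (int \<Rightarrow> real) \<Rightarrow> int \<Rightarrow> real" where
  "Dop eps u = (\<lambda>i. (u (i + 1) - u i) / eps)"

definition Usharp_p :: "nat \<Rightarrow> (int \<Rightarrow> real) \<Rightarrow> bool" where
  "Usharp_p p w \<longleftrightarrow> per p w \<and> (\<Sum>i\<in>{1..int p}. w i) = 0"

definition UH_per :: "real \<Rightarrow> nat \<Rightarrow> nat \<Rightarrow> (nat \<Rightarrow> int) \<Rightarrow> (int \<Rightarrow> real) \<Rightarrow> bool" where
  "UH_per eps N K idx v \<longleftrightarrow> per N v \<and>
     (\<forall>k\<in>{1..K}. \<exists>a b. \<forall>i\<in>{idx k..idx (Suc k)}. v i = a + b * (eps * of_int i))"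

definition UH_sharp :: "real \<Rightarrow> nat \<Rightarrow> nat \<Rightarrow> (nat \<Rightarrow> int) \<Rightarrow> (int \<Rightarrow> real) \<Rightarrow> bool" where
  "UH_sharp eps N K idx v \<longleftrightarrow> UH_per eps N K idx v \<and> meanX N v = 0"

text \<open>The affine function ell_k on eps*Z coinciding with v^H on S_k
  (the affine piece of v^H on {X_i : i_k <= i <= i_(k+1)}).\<close>
definition ellk :: "real \<Rightarrow> (nat \<Rightarrow> int) \<Rightarrow> (int \<Rightarrow> real) \<Rightarrow> nat \<Rightarrow> int \<Rightarrow> real" where
  "ellk eps idx v k = (\<lambda>i. v (idx k) +
      (v (idx (Suc k)) - v (idx k)) / (eps * of_int (idx (Suc k) - idx k))
        * (eps * of_int i - eps * of_int (idx k)))"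

definition ip_rep :: "nat \<Rightarrow> (nat \<Rightarrow> int) \<Rightarrow> nat \<Rightarrow> (int \<Rightarrow> real) \<Rightarrow> (int \<Rightarrow> real) \<Rightarrow> real" where
  "ip_rep p irep k a b = (1 / real p) * (\<Sum>i\<in>{irep k..<irep k + int p}. a i * b i)"

text \<open>psi^eps_{coll,k}(X_i) = psi(X_{icoll k}, X_i/eps) = psi(X_{icoll k}, Y_i).\<close>
definition psi_coll :: "(int \<Rightarrow> int \<Rightarrow> real) \<Rightarrow> (nat \<Rightarrow> int) \<Rightarrow> nat \<Rightarrow> int \<Rightarrow> real" where
  "psi_coll psi icoll k = (\<lambda>i. psi (icoll k) i)"

definition cellsol :: "real \<Rightarrow> nat \<Rightarrow> (nat \<Rightarrow> int) \<Rightarrow> (int \<Rightarrow> int \<Rightarrow> real) \<Rightarrow> (nat \<Rightarrow> int)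
     \<Rightarrow> nat \<Rightarrow> (int \<Rightarrow> real) \<Rightarrow> (int \<Rightarrow> real) \<Rightarrow> bool" where
  "cellsol eps p irep psi icoll k l w \<longleftrightarrow> Usharp_p p w \<and>
     (\<forall>s. Usharp_p p s \<longrightarrow>
        ip_rep p irep k (\<lambda>i. psi_coll psi icoll k i * Dop eps (\<lambda>j. l j + w j) i) (Dop eps s) = 0)"

definition Rk :: "real \<Rightarrow> nat \<Rightarrow> (nat \<Rightarrow> int) \<Rightarrow> (nat \<Rightarrow> int) \<Rightarrow> (int \<Rightarrow> int \<Rightarrow> real)
     \<Rightarrow> (nat \<Rightarrow> int) \<Rightarrow> nat \<Rightarrow> (int \<Rightarrow> real) \<Rightarrow> int \<Rightarrow> real" where
  "Rk eps p idx irep psi icoll k v =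
     (\<lambda>i. ellk eps idx v k i + (THE w. cellsol eps p irep psi icoll k (ellk eps idx v k) w) i)"

definition HQC_form :: "real \<Rightarrow> nat \<Rightarrow> nat \<Rightarrow> (nat \<Rightarrow> int) \<Rightarrow> (nat \<Rightarrow> int) \<Rightarrow> (int \<Rightarrow> int \<Rightarrow> real)
     \<Rightarrow> (nat \<Rightarrow> int) \<Rightarrow> (int \<Rightarrow> real) \<Rightarrow> (int \<Rightarrow> real) \<Rightarrow> real" where
  "HQC_form eps p K idx irep psi icoll u v =
     (\<Sum>k\<in>{1..K}. eps * of_int (idx (Suc k) - idx k) *
        ip_rep p irep k
          (\<lambda>i. psi_coll psi icoll k i * Dop eps (Rk eps p idx irep psi icoll k u) i)
          (Dop eps (Rk eps p idx irep psi icoll k v)))"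

definition psi0 :: "nat \<Rightarrow> (int \<Rightarrow> int \<Rightarrow> real) \<Rightarrow> int \<Rightarrow> real" where
  "psi0 p psi i = inverse ((1 / real p) * (\<Sum>j\<in>{1..int p}. 1 / psi i j))"

definition psi0coll :: "nat \<Rightarrow> nat \<Rightarrow> (nat \<Rightarrow> int) \<Rightarrow> (int \<Rightarrow> int \<Rightarrow> real) \<Rightarrow> (nat \<Rightarrow> int)
     \<Rightarrow> int \<Rightarrow> real" where
  "psi0coll p K idx psi icoll i =
     psi0 p psi (icoll (THE k. k \<in> {1..K} \<and> idx k \<le> i \<and> i < idx (Suc k)))"

end

theory Submission
  imports Defs
begin


lemma sum_int_shift: "sum h {a..<a + int m} = (\<Sum>n<m. h (a + int n))"
proof (induction m)
  case 0 then show ?case by simp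
next
  case (Suc m)
  have "{a..<a + int (Suc m)} = insert (a + int m) {a..<a + int m}" by auto
  then show ?case using Suc by (simp add: add.commute)
qed

lemma per_sum:
  assumes "per p g"
  shows "sum g {a..<a + int p} = sum g {b..<b + int p}"
proof -
  have step: "sum g {x+1..<x+1 + int p} = sum g {x..<x + int p}" for x
  proof -
    have "(\<Sum>n<Suc p. g (x + int n)) = g x + (\<Sum>n<p. g (x + 1 + int n))"
      by (subst sum.lessThan_Suc_shift) (simp add: add_ac)
    moreover have "(\<Sum>n<Suc p. g (x + int n)) = (\<Sum>n<p. g (x + int n)) + g x"
      using assms by (simp add: per_def)
    ultimately show ?thesis by (simp add: sum_int_shift)
  qed
  have all: "sum g {x..<x + int p} = sum g {0..<0 + int p}" for x
  proof (induction x rule: int_induct[where k=0])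
    case base then show ?case by simp
  next
    case (step1 i) then show ?case using step[of i] by simp
  next
    case (step2 i) then show ?case using step[of "i - 1"] by simp
  qed
  show ?thesis using all[of a] all[of b] by simp
qed

lemma per_mult:
  assumes "per p g"
  shows "g (i + int p * q) = g i"
proof (induction q rule: int_induct[where k=0])
  case base then show ?case by simp
next
  case (step1 j)
  have "g (i + int p * (j+1)) = g (i + int p * j + int p)" by (simp add: algebra_simps)
  also have "\<dots> = g (i + int p * j)" using assms by (simp add: per_def)
  finally show ?case using step1 by simp
next
  case (step2 j)
  have "g (i + int p * j) = g (i + int p * (j - 1) + int p)" by (simp add: algebra_simps)
  also have "\<dots> = g (i + int p * (j - 1))" using assms by (simp add: per_def)
  finally show ?case using step2 by simp
qed

lemma telesc: fixes s :: "int \<Rightarrow> real" shows "(\<Sum>i\<in>{a..<a + int m}. s (i+1) - s i) = s (a + int m) - s a"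
proof (induction m)
  case 0 then show ?case by simp
next
  case (Suc m)
  have "{a..<a + int (Suc m)} = insert (a + int m) {a..<a + int m}" by auto
  then show ?case using Suc by (simp add: algebra_simps)
qed

lemma Icc_Ico: "{1..int p} = {1..<1 + int p}" by auto

lemma per_window_all:
  assumes dper: "per p d" and p: "p > 0"
    and win: "\<forall>i\<in>{a..<a + int p}. P i"
    and Pper: "\<And>j q. P j \<Longrightarrow> P (j + int p * q)"
  shows "P i"
proof -
  define j where "j = a + (i - a) mod int p"
  have "(i - a) mod int p + int p * ((i - a) div int p) = i - a" by (rule mod_mult_div_eq)
  then have ji: "i = j + int p * ((i - a) div int p)" unfolding j_def by linarith
  have "j \<in> {a..<a + int p}" unfolding j_def using p by simp
  then have "P j" using win by blast
  then show ?thesis using Pper[of j "(i - a) div int p"] ji by simp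
qed

lemma cell:
  fixes q l :: "int \<Rightarrow> real"
  assumes eps: "eps > 0" and p: "p > 0" and qper: "per p q" and qpos: "\<forall>i. q i > 0"
    and lin: "\<forall>i. l (i+1) - l i = eps * s"
  shows "Dop eps (\<lambda>j. l j + (THE w. Usharp_p p w \<and> (\<forall>s'. Usharp_p p s' \<longrightarrow>
      (1/real p) * (\<Sum>i\<in>{a..<a + int p}. q i * Dop eps (\<lambda>j. l j + w j) i * Dop eps s' i) = 0)) j) i
    = real p * s / (\<Sum>j\<in>{1..int p}. 1 / q j) / q i"
proof -
  define S where "S = (\<Sum>j\<in>{1..int p}. 1 / q j)"
  have Spos: "S > 0" unfolding S_def using p qpos by (intro sum_pos) auto
  define c where "c = real p * s / S"
  define g where "g i = eps * (c / q i - s)" for i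
  have gper: "per p g" using qper unfolding per_def g_def by simp
  have gsum: "sum g {x..<x + int p} = 0" for x
  proof -
    have "sum g {x..<x + int p} = sum g {1..<1 + int p}" using per_sum[OF gper] .
    also have "\<dots> = (\<Sum>i\<in>{1..<1 + int p}. (eps*c) * (1 / q i) - eps * s)"
      unfolding g_def by (intro sum.cong) (auto simp: algebra_simps)
    also have "\<dots> = eps * (c * S - real p * s)"
      unfolding S_def Icc_Ico sum_subtractf sum_distrib_left[symmetric] by (simp add: algebra_simps)
    also have "\<dots> = 0" unfolding c_def using Spos by simp
    finally show ?thesis .
  qed
  define W where "W i = sum g {0..<i} - sum g {i..<0}" for i
  have Wstep: "W (i+1) - W i = g i" for i
  proof (cases "i \<ge> 0")
    case True
    have "{0..<i+1} = insert i {0..<i}" using True by auto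
    then show ?thesis using True unfolding W_def by simp
  next
    case False
    have "{i..<0} = insert i {i+1..<0}" using False by auto
    moreover have "{0..<i+1} = {}" "{0..<i} = {}" using False by auto
    ultimately show ?thesis unfolding W_def by simp
  qed
  have Wm: "W (i + int m) - W i = sum g {i..<i + int m}" for i m
  proof (induction m)
    case 0 then show ?case by simp
  next
    case (Suc m)
    have "{i..<i + int (Suc m)} = insert (i + int m) {i..<i + int m}" by auto
    then have "sum g {i..<i + int (Suc m)} = g (i + int m) + sum g {i..<i + int m}" by simp
    moreover have "W (i + int (Suc m)) - W (i + int m) = g (i + int m)"
      using Wstep[of "i + int m"] by (simp add: ac_simps)
    ultimately show ?case using Suc by linarith
  qed
  have Wper: "per p W" unfolding per_def using Wm[of _ p] gsum by simp
  define m0 where "m0 = (\<Sum>i\<in>{1..int p}. W i) / real p"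
  define w where "w i = W i - m0" for i
  have Dw: "Dop eps (\<lambda>j. l j + w j) i = c / q i" for i
  proof -
    have "Dop eps (\<lambda>j. l j + w j) i = ((l (i+1) - l i) + (W (i+1) - W i)) / eps"
      unfolding Dop_def w_def by (simp add: algebra_simps)
    also have "\<dots> = (eps * s + eps * (c / q i - s)) / eps" using lin Wstep g_def by simp
    also have "\<dots> = c / q i" using eps by (simp add: field_simps)
    finally show ?thesis .
  qed
  define P where "P w' \<longleftrightarrow> Usharp_p p w' \<and> (\<forall>s'. Usharp_p p s' \<longrightarrow>
      (1/real p) * (\<Sum>i\<in>{a..<a + int p}. q i * Dop eps (\<lambda>j. l j + w' j) i * Dop eps s' i) = 0)" for w'
  have Pw: "P w"
  proof -
    have "per p w" using Wper unfolding per_def w_def by simp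
    moreover have "(\<Sum>i\<in>{1..int p}. w i) = 0"
      unfolding w_def m0_def using p by (simp add: sum_subtractf)
    moreover have "(\<Sum>i\<in>{a..<a + int p}. q i * Dop eps (\<lambda>j. l j + w j) i * Dop eps s' i) = 0"
      if s': "Usharp_p p s'" for s'
    proof -
      have "(\<Sum>i\<in>{a..<a + int p}. q i * Dop eps (\<lambda>j. l j + w j) i * Dop eps s' i)
          = (\<Sum>i\<in>{a..<a + int p}. (c / eps) * (s' (i+1) - s' i))"
      proof (intro sum.cong refl)
        fix i
        have "q i \<noteq> 0" using qpos by (metis less_irrefl)
        then show "q i * Dop eps (\<lambda>j. l j + w j) i * Dop eps s' i = (c / eps) * (s' (i+1) - s' i)"
          unfolding Dw by (simp add: Dop_def)
      qed
      also have "\<dots> = (c/eps) * (s' (a + int p) - s' a)"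
        by (simp only: sum_distrib_left[symmetric] telesc)
      also have "\<dots> = 0" using s' unfolding Usharp_p_def per_def by simp
      finally show ?thesis .
    qed
    ultimately show ?thesis unfolding P_def Usharp_p_def by simp
  qed
  have uniq: "w' = w" if Pw': "P w'" for w'
  proof -
    define d where "d i = w' i - w i" for i
    have dsh: "Usharp_p p d"
      using Pw Pw' unfolding P_def Usharp_p_def per_def d_def by (simp add: sum_subtractf)
    have e1: "(\<Sum>i\<in>{a..<a + int p}. q i * Dop eps (\<lambda>j. l j + w' j) i * Dop eps d i) = 0"
      using Pw' dsh p unfolding P_def by auto
    have e2: "(\<Sum>i\<in>{a..<a + int p}. q i * Dop eps (\<lambda>j. l j + w j) i * Dop eps d i) = 0"
      using Pw dsh p unfolding P_def by auto
    have "(\<Sum>i\<in>{a..<a + int p}. q i * (Dop eps d i)^2) =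
       (\<Sum>i\<in>{a..<a + int p}. q i * Dop eps (\<lambda>j. l j + w' j) i * Dop eps d i)
       - (\<Sum>i\<in>{a..<a + int p}. q i * Dop eps (\<lambda>j. l j + w j) i * Dop eps d i)"
      unfolding sum_subtractf[symmetric]
    proof (intro sum.cong refl)
      fix i
      have "Dop eps (\<lambda>j. l j + w' j) i - Dop eps (\<lambda>j. l j + w j) i = Dop eps d i"
        unfolding Dop_def d_def using eps by (simp add: field_simps)
      then show "q i * (Dop eps d i)^2 = q i * Dop eps (\<lambda>j. l j + w' j) i * Dop eps d i
           - q i * Dop eps (\<lambda>j. l j + w j) i * Dop eps d i"
        by (simp add: power2_eq_square algebra_simps flip: \<open>Dop eps (\<lambda>j. l j + w' j) i - Dop eps (\<lambda>j. l j + w j) i = Dop eps d i\<close>)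
    qed
    then have z: "(\<Sum>i\<in>{a..<a + int p}. q i * (Dop eps d i)^2) = 0" using e1 e2 by simp
    have "\<forall>i\<in>{a..<a + int p}. q i * (Dop eps d i)^2 = 0"
    proof -
      have nn: "\<And>i. 0 \<le> q i * (Dop eps d i)^2"
        using qpos by (metis less_imp_le mult_nonneg_nonneg zero_le_power2)
      show ?thesis using z sum_nonneg_eq_0_iff[of "{a..<a + int p}" "\<lambda>i. q i * (Dop eps d i)^2"] nn
        by auto
    qed
    then have win: "\<forall>i\<in>{a..<a + int p}. d (i+1) = d i"
      using qpos eps by (auto simp: Dop_def) (metis atLeastLessThan_iff less_irrefl)
    have dper: "per p d" using dsh unfolding Usharp_p_def by simp
    have dstep: "d (i+1) = d i" for i
    proof (rule per_window_all[OF dper p win])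
      fix j r assume "d (j+1) = d j"
      then show "d (j + int p * r + 1) = d (j + int p * r)"
        using per_mult[OF dper, of j r] per_mult[OF dper, of "j+1" r] by (simp add: add_ac)
    qed
    have dconst: "d i = d 0" for i
    proof (induction i rule: int_induct[where k=0])
      case base then show ?case by simp
    next
      case (step1 i) then show ?case using dstep[of i] by simp
    next
      case (step2 i) then show ?case using dstep[of "i - 1"] by simp
    qed
    have "(\<Sum>i\<in>{1..int p}. d i) = (\<Sum>i\<in>{1..int p}. d 0)"
      by (rule sum.cong[OF refl]) (rule dconst)
    then have "(\<Sum>i\<in>{1..int p}. d i) = real p * d 0" by simp
    then have "d 0 = 0" using dsh p unfolding Usharp_p_def by simp
    then show ?thesis using dconst unfolding d_def by fastforce
  qed
  have "(THE w. P w) = w" using Pw uniq by (rule the_equality)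
  then have "(THE w. Usharp_p p w \<and> (\<forall>s'. Usharp_p p s' \<longrightarrow>
      (1/real p) * (\<Sum>i\<in>{a..<a + int p}. q i * Dop eps (\<lambda>j. l j + w j) i * Dop eps s' i) = 0)) = w"
    unfolding P_def .
  then show ?thesis using Dw unfolding c_def S_def by simp
qed



lemma aff_step: "(A + t * (e * of_int (i+1) - e * B)) - (A + t * (e * of_int i - e * B)) = e * (t::real)"
  by (simp add: algebra_simps)

lemma sum_split_ivl:
  fixes l m u :: int
  assumes "l \<le> m" "m \<le> u"
  shows "sum F {l..<u} = sum F {l..<m} + sum F {m..<u}"
proof -
  have "{l..<u} = {l..<m} \<union> {m..<u}" using ivl_disj_un_two(3)[OF assms] by simp
  moreover have "{l..<m} \<inter> {m..<u} = {}" by auto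
  ultimately show ?thesis by (simp add: sum.union_disjoint)
qed

lemma idx_le:
  assumes mono: "\<forall>k\<in>{1..K}. idx k < idx (Suc k)"
  shows "1 \<le> k \<Longrightarrow> k \<le> k' \<Longrightarrow> k' \<le> Suc K \<Longrightarrow> (idx k :: int) \<le> idx k'"
proof (induction k')
  case 0 then show ?case by simp
next
  case (Suc k')
  show ?case
  proof (cases "k = Suc k'")
    case True then show ?thesis by simp
  next
    case False
    then have "k \<le> k'" "k' \<in> {1..K}" using Suc.prems by auto
    then have "idx k \<le> idx k'" "idx k' < idx (Suc k')" using Suc mono by auto
    then show ?thesis by simp
  qed
qed

lemma blocks:
  assumes mono: "\<forall>k\<in>{1..K}. idx k < idx (Suc k)"
  shows "m \<le> K \<Longrightarrow> (\<Sum>k\<in>{1..m}. sum F {idx k..<idx (Suc k)}) = sum F {idx 1..<(idx (Suc m) :: int)}"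
proof (induction m)
  case 0 then show ?case by simp
next
  case (Suc m)
  have "idx 1 \<le> idx (Suc m)" using idx_le[OF mono, of 1 "Suc m"] Suc.prems by simp
  moreover have "idx (Suc m) \<le> idx (Suc (Suc m))" using mono Suc.prems by force
  ultimately have "sum F {idx 1..<idx (Suc (Suc m))} = sum F {idx 1..<idx (Suc m)} + sum F {idx (Suc m)..<idx (Suc (Suc m))}"
    by (rule sum_split_ivl)
  then show ?case using Suc by simp
qed

theorem lemma6p6:
  fixes eps :: real and N p K :: nat
    and idx irep icoll :: "nat \<Rightarrow> int"
    and psi :: "int \<Rightarrow> int \<Rightarrow> real"
    and f u :: "int \<Rightarrow> real"
  assumes eps_pos: "eps > 0" and N_pos: "N > 0" and p_pos: "p > 0"
    and norm: "real N * eps = 1"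
    and psi_per: "\<forall>i j. psi (i + int N) j = psi i j \<and> psi i (j + int p) = psi i j"
    and A1: "\<exists>c C. 0 < c \<and> (\<forall>i j. c \<le> psi i j \<and> psi i j \<le> C)"
    and A2: "\<exists>C'. \<forall>i\<in>{1..int N}. \<forall>j\<in>{1..int p}. \<bar>(psi (i + 1) j - psi i j) / eps\<bar> \<le> C'"
    and f_per: "per N f" and f_mean: "meanX N f = 0"
    and K_pos: "K \<ge> 1"
    and idx_first: "idx 1 = 1"
    and idx_mono: "\<forall>k\<in>{1..K}. idx k < idx (Suc k)"
    and idx_K: "idx K \<le> int N"
    and idx_last: "idx (Suc K) = int N + 1"
    and rep: "\<forall>k\<in>{1..K}. idx k \<le> irep k \<and> irep k + int p \<le> idx (Suc k)"
    and coll: "\<forall>k\<in>{1..K}. irep k \<le> icoll k \<and> icoll k < irep k + int p"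
    and u_H: "UH_sharp eps N K idx u"
  shows "(\<forall>v. UH_sharp eps N K idx v \<longrightarrow> HQC_form eps p K idx irep psi icoll u v = ipX N f v)
     \<longleftrightarrow> (\<forall>v. UH_sharp eps N K idx v \<longrightarrow>
            ipX N (\<lambda>i. psi0coll p K idx psi icoll i * Dop eps u i) (Dop eps v) = ipX N f v)"
proof -
  from A1 obtain c0 C0 where c0: "0 < c0" and cb: "\<forall>i j. c0 \<le> psi i j \<and> psi i j \<le> C0" by blast
  have psipos: "\<forall>j. psi i j > 0" for i using c0 cb by (meson less_le_trans)
  have psiper: "per p (psi i)" for i using psi_per unfolding per_def by simp
  define sl where "sl v k = (v (idx (Suc k)) - v (idx k)) / (eps * of_int (idx (Suc k) - idx k))"
    for v :: "int \<Rightarrow> real" and k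
  define S where "S k = (\<Sum>j\<in>{1..int p}. 1 / psi (icoll k) j)" for k
  define P where "P k = psi0 p psi (icoll k)" for k
  have Spos: "S k > 0" for k unfolding S_def using p_pos psipos by (intro sum_pos) auto
  have P_S: "P k = real p / S k" for k unfolding P_def psi0_def S_def by (simp add: field_simps)
  have Dv_block: "Dop eps v i = sl v k"
    if v: "UH_per eps N K idx v" and k: "k \<in> {1..K}" and i: "idx k \<le> i" "i < idx (Suc k)" for v k i
  proof -
    obtain a b where ab: "\<forall>i\<in>{idx k..idx (Suc k)}. v i = a + b * (eps * of_int i)"
      using v k unfolding UH_per_def by blast
    have lt: "idx k < idx (Suc k)" using idx_mono k by blast
    have "Dop eps v i = ((a + b * (eps * of_int (i+1))) - (a + b * (eps * of_int i))) / eps"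
      unfolding Dop_def using ab i by simp
    also have "\<dots> = b" using eps_pos by (simp add: field_simps)
    finally have 1: "Dop eps v i = b" .
    have "sl v k = ((a + b * (eps * of_int (idx (Suc k)))) - (a + b * (eps * of_int (idx k))))
        / (eps * of_int (idx (Suc k) - idx k))"
      unfolding sl_def using ab lt by simp
    also have "\<dots> = b" using eps_pos lt by (simp add: field_simps)
    finally show ?thesis using 1 by simp
  qed
  have DR: "Dop eps (Rk eps p idx irep psi icoll k v) i = P k * sl v k / psi (icoll k) i" for v k i
  proof -
    have lin: "\<forall>i. ellk eps idx v k (i+1) - ellk eps idx v k i = eps * sl v k"
      unfolding ellk_def sl_def by (intro allI aff_step)
    have eq: "Rk eps p idx irep psi icoll k v = (\<lambda>j. ellk eps idx v k j + (THE w. Usharp_p p w \<and> (\<forall>s'. Usharp_p p s' \<longrightarrow>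
      (1/real p) * (\<Sum>i\<in>{irep k..<irep k + int p}. psi (icoll k) i * Dop eps (\<lambda>j. ellk eps idx v k j + w j) i * Dop eps s' i) = 0)) j)"
      unfolding Rk_def cellsol_def ip_rep_def psi_coll_def by simp
    show ?thesis unfolding eq cell[OF eps_pos p_pos psiper psipos lin] P_S S_def by simp
  qed
  have ipk: "ip_rep p irep k (\<lambda>i. psi_coll psi icoll k i * Dop eps (Rk eps p idx irep psi icoll k u) i)
          (Dop eps (Rk eps p idx irep psi icoll k v)) = P k * sl u k * sl v k" for v k
  proof -
    have "(\<Sum>i\<in>{irep k..<irep k + int p}. psi (icoll k) i * (P k * sl u k / psi (icoll k) i) * (P k * sl v k / psi (icoll k) i))
        = (\<Sum>i\<in>{irep k..<irep k + int p}. (P k * P k * sl u k * sl v k) * (1 / psi (icoll k) i))"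
    proof (intro sum.cong refl)
      fix i
      have "psi (icoll k) i \<noteq> 0" using psipos by (metis less_irrefl)
      then show "psi (icoll k) i * (P k * sl u k / psi (icoll k) i) * (P k * sl v k / psi (icoll k) i)
          = (P k * P k * sl u k * sl v k) * (1 / psi (icoll k) i)" by (simp add: field_simps)
    qed
    also have "\<dots> = (P k * P k * sl u k * sl v k) * S k"
    proof -
      have pr: "per p (\<lambda>i. 1 / psi (icoll k) i)" using psiper[of "icoll k"] unfolding per_def by simp
      have "(\<Sum>i\<in>{irep k..<irep k + int p}. 1 / psi (icoll k) i) = S k"
        unfolding S_def Icc_Ico by (rule per_sum[OF pr])
      then show ?thesis by (simp only: sum_distrib_left[symmetric])
    qed
    finally have "(\<Sum>i\<in>{irep k..<irep k + int p}. psi (icoll k) i * (P k * sl u k / psi (icoll k) i) * (P k * sl v k / psi (icoll k) i))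
        = (P k * P k * sl u k * sl v k) * S k" .
    moreover have "P k * S k = real p" using Spos[of k] by (simp add: P_S)
    ultimately show ?thesis unfolding ip_rep_def psi_coll_def DR using p_pos
      by (simp add: field_simps)
  qed
  have blk: "(\<Sum>i\<in>{idx k..<idx (Suc k)}. psi0coll p K idx psi icoll i * Dop eps u i * Dop eps v i)
      = of_int (idx (Suc k) - idx k) * (P k * sl u k * sl v k)"
    if v: "UH_per eps N K idx v" and k: "k \<in> {1..K}" for v k
  proof -
    have uH: "UH_per eps N K idx u" using u_H unfolding UH_sharp_def by simp
    have "(\<Sum>i\<in>{idx k..<idx (Suc k)}. psi0coll p K idx psi icoll i * Dop eps u i * Dop eps v i)
        = (\<Sum>i\<in>{idx k..<idx (Suc k)}. P k * sl u k * sl v k)"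
    proof (intro sum.cong refl)
      fix i assume i: "i \<in> {idx k..<idx (Suc k)}"
      have "(THE k'. k' \<in> {1..K} \<and> idx k' \<le> i \<and> i < idx (Suc k')) = k"
      proof (rule the_equality)
        show "k \<in> {1..K} \<and> idx k \<le> i \<and> i < idx (Suc k)" using k i by auto
      next
        fix k' assume k': "k' \<in> {1..K} \<and> idx k' \<le> i \<and> i < idx (Suc k')"
        show "k' = k"
        proof (rule ccontr)
          assume "k' \<noteq> k"
          then consider "k < k'" | "k' < k" by linarith
          then show False
          proof cases
            case 1
            then have "idx (Suc k) \<le> idx k'" using idx_le[OF idx_mono, of "Suc k" k'] k' by auto
            then show False using i k' by auto
          next
            case 2
            then have "idx (Suc k') \<le> idx k" using idx_le[OF idx_mono, of "Suc k'" k] k by auto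
            then show False using i k' by auto
          qed
        qed
      qed
      then have "psi0coll p K idx psi icoll i = P k" unfolding psi0coll_def P_def by simp
      moreover have "Dop eps u i = sl u k" using Dv_block[OF uH k] i by auto
      moreover have "Dop eps v i = sl v k" using Dv_block[OF v k] i by auto
      ultimately show "psi0coll p K idx psi icoll i * Dop eps u i * Dop eps v i = P k * sl u k * sl v k"
        by simp
    qed
    also have "\<dots> = of_int (idx (Suc k) - idx k) * (P k * sl u k * sl v k)"
    proof -
      have "idx k < idx (Suc k)" using idx_mono k by blast
      then have "real (nat (idx (Suc k) - idx k)) = of_int (idx (Suc k) - idx k)" by simp
      then show ?thesis by simp
    qed
    finally show ?thesis .
  qed
  have key: "HQC_form eps p K idx irep psi icoll u v =
      ipX N (\<lambda>i. psi0coll p K idx psi icoll i * Dop eps u i) (Dop eps v)"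
    if v: "UH_per eps N K idx v" for v
  proof -
    have "HQC_form eps p K idx irep psi icoll u v =
        (\<Sum>k\<in>{1..K}. eps * (of_int (idx (Suc k) - idx k) * (P k * sl u k * sl v k)))"
      unfolding HQC_form_def ipk by (simp add: mult.assoc)
    also have "\<dots> = eps * (\<Sum>k\<in>{1..K}. (\<Sum>i\<in>{idx k..<idx (Suc k)}. psi0coll p K idx psi icoll i * Dop eps u i * Dop eps v i))"
      by (simp add: sum_distrib_left blk[OF v])
    also have "\<dots> = eps * (\<Sum>i\<in>{idx 1..<idx (Suc K)}. psi0coll p K idx psi icoll i * Dop eps u i * Dop eps v i)"
      by (simp only: blocks[OF idx_mono order_refl])
    also have "\<dots> = ipX N (\<lambda>i. psi0coll p K idx psi icoll i * Dop eps u i) (Dop eps v)"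
    proof -
      have "{idx 1..<idx (Suc K)} = {1..int N}" using idx_first idx_last by auto
      moreover have "eps = 1 / real N" using norm N_pos by (simp add: field_simps)
      ultimately show ?thesis unfolding ipX_def by simp
    qed
    finally show ?thesis .
  qed
  show ?thesis using key unfolding UH_sharp_def by auto
qed

end
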